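(* Let $\mathcal{G}=(\mathcal{V},\mathcal{E})$ be a directed graph with activation probabilities $p_{(u,v)}\in[0,1]$ for each edge $(u,v)\in\mathcal{E}$, and let $\mathbf{P}\in[0,1]^{|\mathcal{V}|\times|\mathcal{V}|}$ be the activation probability matrix, whose $(u,v)$-entry is $p_{(u,v)}$ if $(u,v)\in\mathcal{E}$ and $0$ otherwise. Fix a seed set $S\subseteq\mathcal{V}$ and consider the independent cascade process started from $S$. For $i\ge 0$ let $\boldsymbol{\pi}_i\in[0,1]^{|\mathcal{V}|}$ be the row vector whose $x$-entry is $\rho_i(x)$, the probability that node $x$ is infected at some step $\le i$. Then for all $i\geq 2$, $$\boldsymbol{\pi}_i \le \mathbf{u}_i := \boldsymbol{\pi}_{i-1} + (\boldsymbol{\pi}_{i-1}-\boldsymbol{\pi}_{i-2})\mathbf{P}$$ entrywise, i.e., for every $v\in\mathcal{V}$, $\rho_i(v)\le \rho_{i-1}(v)+\sum_{u:(u,v)\in\mathcal{E}}(\rho_{i-1}(u)-\rho_{i-2}(u))\,p_{(u,v)}$.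
   Context: Independent cascade (IC) model: at step $0$ exactly the seed nodes in $S$ are infected. Whenever a node $u$ becomes newly infected at step $t$, it makes a single attempt, independently of everything else, to infect each out-neighbor $v$ (with $(u,v)\in\mathcal{E}$), succeeding with probability $p_{(u,v)}$; an uninfected $v$ infected by such a success becomes infected at step $t+1$. Infected nodes stay infected, and the process stops when no new nodes are infected. $\rho_i(x)$ denotes the probability that $x$ is infected during the first $i$ steps (steps $0,\dots,i$). *)

theory Defs
  imports "HOL-Probability.Probability"
begin

text \<open>Independent cascade with pre-sampled edge coins: the coin of edge (u,v) decides the
  (single) attempt of u on v, made when u becomes newly infected.  ic_state returns the pair
  (nodes infected at some step \<le> t, nodes newly infected at step t).\<close>

fun ic_state :: "('a \<times> 'a) set \<Rightarrow> 'a set \<Rightarrow> ('a \<times> 'a \<Rightarrow> bool) \<Rightarrow> nat \<Rightarrow> 'a set \<times> 'a set" where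
  "ic_state E S \<omega> 0 = (S, S)"
| "ic_state E S \<omega> (Suc t) =
     (let A = fst (ic_state E S \<omega> t); N = snd (ic_state E S \<omega> t);
          N' = {v. v \<notin> A \<and> (\<exists>u\<in>N. (u, v) \<in> E \<and> \<omega> (u, v))}
      in (A \<union> N', N'))"

definition infected_upto :: "('a \<times> 'a) set \<Rightarrow> 'a set \<Rightarrow> ('a \<times> 'a \<Rightarrow> bool) \<Rightarrow> nat \<Rightarrow> 'a set" where
  "infected_upto E S \<omega> i = fst (ic_state E S \<omega> i)"

definition coin_pmf :: "('a \<times> 'a) set \<Rightarrow> ('a \<times> 'a \<Rightarrow> real) \<Rightarrow> ('a \<times> 'a \<Rightarrow> bool) pmf" where
  "coin_pmf E p = Pi_pmf E False (\<lambda>e. bernoulli_pmf (p e))"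

definition rho :: "('a \<times> 'a) set \<Rightarrow> ('a \<times> 'a \<Rightarrow> real) \<Rightarrow> 'a set \<Rightarrow> nat \<Rightarrow> 'a \<Rightarrow> real" where
  "rho E p S i x = measure_pmf.prob (coin_pmf E p) {\<omega>. x \<in> infected_upto E S \<omega> i}"

definition act_matrix :: "('a \<times> 'a) set \<Rightarrow> ('a \<times> 'a \<Rightarrow> real) \<Rightarrow> 'a \<Rightarrow> 'a \<Rightarrow> real" where
  "act_matrix E p u v = (if (u, v) \<in> E then p (u, v) else 0)"

end

theory Submission
  imports Defs
begin

lemma prod_prob:
  fixes M :: "'b pmf" and N :: "'c pmf"
  shows "measure_pmf.prob (pair_pmf M N) (A \<times> B) = measure_pmf.prob M A * measure_pmf.prob N B"
proof -
  have "measure_pmf.prob (pair_pmf M N) (A \<times> B) = measure_pmf.prob (pair_pmf M N) ((A \<inter> set_pmf M) \<times> (B \<inter> set_pmf N))"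
    by (subst measure_Int_set_pmf[symmetric]) (auto intro!: arg_cong[where f="measure_pmf.prob _"])
  also have "\<dots> = measure_pmf.prob M (A \<inter> set_pmf M) * measure_pmf.prob N (B \<inter> set_pmf N)"
    by (rule measure_pmf_prob_product) auto
  also have "\<dots> = measure_pmf.prob M A * measure_pmf.prob N B"
    by (simp add: measure_Int_set_pmf)
  finally show ?thesis .
qed

lemma indep_coord:
  assumes fin: "finite E" and e: "e \<in> E" and pe: "0 \<le> p e" "p e \<le> 1"
    and inv: "\<And>f b. (f \<in> B) = ((f(e:=b)) \<in> B)"
  shows "measure_pmf.prob (coin_pmf E p) (B \<inter> {\<omega>. \<omega> e}) = measure_pmf.prob (coin_pmf E p) B * p e"
proof -
  define E' where "E' = E - {e}"
  have EE: "E = insert e E'" "finite E'" "e \<notin> E'" using e fin by (auto simp: E'_def)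
  define Q where "Q = Pi_pmf E' False (\<lambda>e. bernoulli_pmf (p e))"
  define B' where "B' = {f. f(e:=True) \<in> B}"
  have cp: "coin_pmf E p = map_pmf (\<lambda>(y,f). f(e:=y)) (pair_pmf (bernoulli_pmf (p e)) Q)"
    unfolding coin_pmf_def Q_def using EE by (simp add: Pi_pmf_insert)
  have inv2: "f(e:=y) \<in> B \<longleftrightarrow> f(e:=True) \<in> B" for f y
    using inv[of "f(e:=y)" True] by simp
  have s1: "(\<lambda>(y,f). f(e:=y)) -` (B \<inter> {\<omega>. \<omega> e}) = {True} \<times> B'"
    by (auto simp: B'_def)
  have s2: "(\<lambda>(y,f). f(e:=y)) -` B = UNIV \<times> B'"
  proof (intro set_eqI iffI)
    fix x :: "bool \<times> _" assume "x \<in> (\<lambda>(y,f). f(e:=y)) -` B"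
    then show "x \<in> UNIV \<times> B'" using inv2[of "snd x" "fst x"] by (cases x) (simp add: B'_def)
  next
    fix x :: "bool \<times> _" assume "x \<in> UNIV \<times> B'"
    then show "x \<in> (\<lambda>(y,f). f(e:=y)) -` B" using inv2[of "snd x" "fst x"] by (cases x) (simp add: B'_def)
  qed
  have 1: "measure_pmf.prob (coin_pmf E p) (B \<inter> {\<omega>. \<omega> e}) = measure_pmf.prob (pair_pmf (bernoulli_pmf (p e)) Q) ({True} \<times> B')"
    unfolding cp measure_map_pmf s1 ..
  have 2: "measure_pmf.prob (coin_pmf E p) B = measure_pmf.prob (pair_pmf (bernoulli_pmf (p e)) Q) (UNIV \<times> B')"
    unfolding cp measure_map_pmf s2 ..
  show ?thesis unfolding 1 2 prod_prob using pe by (simp add: measure_pmf_single)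
qed


lemma ic_Suc_fst: "fst (ic_state E S w (Suc t)) = fst (ic_state E S w t) \<union> snd (ic_state E S w (Suc t))"
  by (simp add: Let_def)

lemma ic_Suc_snd: "snd (ic_state E S w (Suc t)) =
   {v. v \<notin> fst (ic_state E S w t) \<and> (\<exists>u\<in>snd (ic_state E S w t). (u, v) \<in> E \<and> w (u, v))}"
  by (simp add: Let_def)

lemma ic_N_sub: "snd (ic_state E S w t) \<subseteq> fst (ic_state E S w t)"
  by (cases t) (auto simp: Let_def)

lemma ic_A_mono: "s \<le> t \<Longrightarrow> fst (ic_state E S w s) \<subseteq> fst (ic_state E S w t)"
proof (induction t)
  case 0 then show ?case by simp
next
  case (Suc t)
  show ?case
  proof (cases "s = Suc t")
    case False
    then have "s \<le> t" using Suc.prems by simp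
    then show ?thesis using Suc.IH ic_Suc_fst[of E S w t] by blast
  qed simp
qed

lemma ic_not_before:
  assumes "u \<in> snd (ic_state E S w (Suc t))" "s < Suc t"
  shows "u \<notin> snd (ic_state E S w s)"
proof
  assume "u \<in> snd (ic_state E S w s)"
  then have "u \<in> fst (ic_state E S w t)"
    using ic_N_sub[of E S w s] ic_A_mono[of s t E S w] assms(2) by auto
  then show False using assms(1) ic_Suc_snd[of E S w t] by auto
qed

lemma ic_agree:
  assumes "\<forall>s<t. u \<notin> snd (ic_state E S w s)"
  shows "ic_state E S (w((u,x):=b)) t = ic_state E S w t"
  using assms
proof (induction t)
  case 0 then show ?case by simp
next
  case (Suc t)
  have "\<forall>s<t. u \<notin> snd (ic_state E S w s)" using Suc.prems by simp
  note eq = Suc.IH[OF this]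
  have nu: "u \<notin> snd (ic_state E S w t)" using Suc.prems by simp
  have setq: "{v. v \<notin> fst (ic_state E S w t) \<and> (\<exists>u'\<in>snd (ic_state E S w t). (u', v) \<in> E \<and> (w((u,x):=b)) (u', v))}
      = {v. v \<notin> fst (ic_state E S w t) \<and> (\<exists>u'\<in>snd (ic_state E S w t). (u', v) \<in> E \<and> w (u', v))}"
    using nu by (auto; metis)
  show ?case unfolding ic_state.simps Let_def eq setq by (rule refl)
qed

lemma ic_inv:
  assumes "u \<in> snd (ic_state E S w (Suc t))"
  shows "u \<in> snd (ic_state E S (w((u,x):=b)) (Suc t))"
proof -
  have "\<forall>s<Suc t. u \<notin> snd (ic_state E S w s)" using ic_not_before[OF assms] by blast
  from ic_agree[OF this] assms show ?thesis by simp
qed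

lemma rho_Suc:
  "rho E p S (Suc t) x = rho E p S t x
     + measure_pmf.prob (coin_pmf E p) {w. x \<in> snd (ic_state E S w (Suc t))}"
proof -
  have e1: "{w. x \<in> infected_upto E S w (Suc t)} =
        {w. x \<in> fst (ic_state E S w t)} \<union> {w. x \<in> snd (ic_state E S w (Suc t))}"
    unfolding infected_upto_def ic_Suc_fst by blast
  have e2: "{w. x \<in> fst (ic_state E S w t)} \<inter> {w. x \<in> snd (ic_state E S w (Suc t))} = {}"
    unfolding ic_Suc_snd by blast
  have "measure_pmf.prob (coin_pmf E p) ({w. x \<in> fst (ic_state E S w t)} \<union> {w. x \<in> snd (ic_state E S w (Suc t))})
     = measure_pmf.prob (coin_pmf E p) {w. x \<in> fst (ic_state E S w t)} + measure_pmf.prob (coin_pmf E p) {w. x \<in> snd (ic_state E S w (Suc t))}"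
    by (rule measure_pmf.finite_measure_Union[OF _ _ e2]) simp_all
  then show ?thesis
    unfolding rho_def e1 unfolding infected_upto_def .
qed

theorem theorem1:
  fixes V :: "'a set" and E :: "('a \<times> 'a) set" and p :: "'a \<times> 'a \<Rightarrow> real"
    and S :: "'a set" and i :: nat and v :: 'a
  assumes "finite V" and "E \<subseteq> V \<times> V"
    and "\<And>e. e \<in> E \<Longrightarrow> 0 \<le> p e \<and> p e \<le> 1"
    and "S \<subseteq> V" and "i \<ge> 2" and "v \<in> V"
  shows "rho E p S i v \<le> rho E p S (i - 1) v
           + (\<Sum>u\<in>V. (rho E p S (i - 1) u - rho E p S (i - 2) u) * act_matrix E p u v)"
proof -
  define k where "k = i - 2"
  have i: "i = Suc (Suc k)" using assms(5) unfolding k_def by simp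
  define M where "M = coin_pmf E p"
  define B where "B u = {w. u \<in> snd (ic_state E S w (Suc k))}" for u
  define C where "C u = (if (u, v) \<in> E then B u \<inter> {w. w (u, v)} else {})" for u
  have finE: "finite E" using assms(1,2) by (meson finite_SigmaI finite_subset)
  have PC: "measure_pmf.prob M (C u) = measure_pmf.prob M (B u) * act_matrix E p u v" for u
  proof (cases "(u, v) \<in> E")
    case True
    have "measure_pmf.prob M (B u \<inter> {w. w (u, v)}) = measure_pmf.prob M (B u) * p (u, v)"
      unfolding M_def
    proof (rule indep_coord[OF finE True])
      show "0 \<le> p (u, v)" "p (u, v) \<le> 1" using assms(3)[OF True] by auto
      show "(f \<in> B u) = (f((u, v) := b) \<in> B u)" for f b
      proof
        assume "f \<in> B u" then show "f((u, v) := b) \<in> B u" unfolding B_def mem_Collect_eq by (rule ic_inv)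
      next
        assume "f((u, v) := b) \<in> B u"
        then have "(f((u, v) := b))((u, v) := f (u, v)) \<in> B u" unfolding B_def mem_Collect_eq by (rule ic_inv)
        then show "f \<in> B u" by simp
      qed
    qed
    then show ?thesis using True by (simp add: C_def act_matrix_def)
  qed (simp add: C_def act_matrix_def)
  have sub: "{w. v \<in> snd (ic_state E S w (Suc (Suc k)))} \<subseteq> (\<Union>u\<in>V. C u)"
  proof
    fix w assume "w \<in> {w. v \<in> snd (ic_state E S w (Suc (Suc k)))}"
    then obtain u where u: "u \<in> snd (ic_state E S w (Suc k))" "(u, v) \<in> E" "w (u, v)"
      using ic_Suc_snd[of E S w "Suc k"] by auto
    then have "u \<in> V" using assms(2) by auto
    with u show "w \<in> (\<Union>u\<in>V. C u)" by (auto simp: C_def B_def)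
  qed
  have "measure_pmf.prob M {w. v \<in> snd (ic_state E S w (Suc (Suc k)))} \<le> measure_pmf.prob M (\<Union>u\<in>V. C u)"
    using sub by (rule measure_pmf.finite_measure_mono) simp
  also have "\<dots> \<le> (\<Sum>u\<in>V. measure_pmf.prob M (C u))"
    by (rule measure_pmf.finite_measure_subadditive_finite) (auto simp: assms(1))
  also have "\<dots> = (\<Sum>u\<in>V. measure_pmf.prob M (B u) * act_matrix E p u v)"
    by (simp add: PC)
  finally have key: "measure_pmf.prob M {w. v \<in> snd (ic_state E S w (Suc (Suc k)))}
      \<le> (\<Sum>u\<in>V. measure_pmf.prob M (B u) * act_matrix E p u v)" .
  have d: "rho E p S (Suc k) u - rho E p S k u = measure_pmf.prob M (B u)" for u
    using rho_Suc[of E p S k u] unfolding M_def B_def by linarith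
  have "(\<Sum>u\<in>V. (rho E p S (Suc k) u - rho E p S k u) * act_matrix E p u v)
      = (\<Sum>u\<in>V. measure_pmf.prob M (B u) * act_matrix E p u v)"
    by (rule sum.cong) (simp_all only: d)
  moreover have i12: "i - 1 = Suc k" "i - 2 = k" using i by simp_all
  ultimately show ?thesis using key rho_Suc[of E p S "Suc k" v] unfolding M_def i12 i[symmetric] by linarith
qed

end
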